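(* Let $G^*$ and $G^*_u$ be as in the context. For any $S\subseteq[12]$ and $I=\{4,8,12\}\cap S$, we have $\mathsf{MAIS}(G^*_S)<\alpha(G^*_{S,u})$ if and only if either $S=\{2,10,7\}\cup I$ or $S=\{3,6,11\}\cup I$.
   Context: Consider the three-receiver unicast index coding problem with 12 messages indexed by $[12]$, where receiver $u_i$ demands the messages indexed by $W_i$ and knows those indexed by $K_i$: $W_1=\{1,2,3,4\}$, $W_2=\{5,6,7,8\}$, $W_3=\{9,10,11,12\}$, $K_1=\{5,6,9,10\}$, $K_2=\{1,2,9,11\}$, $K_3=\{1,3,5,7\}$. $G^*$ is the directed graph on vertex set $[12]$ with a directed edge $(a,b)$ iff $b\in K_i$, where $i$ is the unique index with $a\in W_i$. $G^*_u$ is the undirected graph on $[12]$ in which $\{a,b\}$ is an edge iff both $(a,b)$ and $(b,a)$ are edges of $G^*$. For $S\subseteq[12]$, $G^*_S$ and $G^*_{S,u}$ are the subgraphs of $G^*$ and $G^*_u$ induced by $S$. $\mathsf{MAIS}(D)$ is the maximum number of vertices of an acyclic induced subgraph of a directed graph $D$, and $\alpha(H)$ is the independence number of an undirected graph $H$. *)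

theory Defs
  imports Main
begin

text \<open>Demand sets W i and side-information sets K i of the three receivers.\<close>
definition W :: "nat \<Rightarrow> nat set" where
  "W i = (if i = 1 then {1,2,3,4} else if i = 2 then {5,6,7,8}
          else if i = 3 then {9,10,11,12} else {})"

definition K :: "nat \<Rightarrow> nat set" where
  "K i = (if i = 1 then {5,6,9,10} else if i = 2 then {1,2,9,11}
          else if i = 3 then {1,3,5,7} else {})"

definition Gstar_edge :: "nat \<Rightarrow> nat \<Rightarrow> bool" where
  "Gstar_edge a b \<longleftrightarrow> (\<exists>i\<in>{1,2,3}. a \<in> W i \<and> b \<in> K i)"

definition induced_rel :: "('a \<Rightarrow> 'a \<Rightarrow> bool) \<Rightarrow> 'a set \<Rightarrow> ('a \<times> 'a) set" where
  "induced_rel E S = {(a,b). a \<in> S \<and> b \<in> S \<and> E a b}"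

definition MAIS :: "('a \<Rightarrow> 'a \<Rightarrow> bool) \<Rightarrow> 'a set \<Rightarrow> nat" where
  "MAIS E S = Max {card T | T. T \<subseteq> S \<and> acyclic (induced_rel E T)}"

definition und_edge :: "('a \<Rightarrow> 'a \<Rightarrow> bool) \<Rightarrow> 'a \<Rightarrow> 'a \<Rightarrow> bool" where
  "und_edge E a b \<longleftrightarrow> E a b \<and> E b a"

definition indep_number :: "('a \<Rightarrow> 'a \<Rightarrow> bool) \<Rightarrow> 'a set \<Rightarrow> nat" where
  "indep_number H S = Max {card T | T. T \<subseteq> S \<and>
     (\<forall>a\<in>T. \<forall>b\<in>T. a \<noteq> b \<longrightarrow> \<not> H a b)}"

end

theory Submission
  imports Defs
begin

lemma acyc_ord:
  assumes "\<forall>a\<in>T. \<forall>b\<in>T. E a b \<longrightarrow> f a < (f b::nat)"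
  shows "acyclic (induced_rel E T)"
proof -
  have "f x < f y" if "(x,y) \<in> (induced_rel E T)\<^sup>+" for x y
    using that
  proof (induction rule: trancl_induct)
    case (base y) then show ?case using assms by (auto simp: induced_rel_def)
  next
    case (step y z) then show ?case using assms by (fastforce simp: induced_rel_def)
  qed
  then show ?thesis unfolding acyclic_def by blast
qed

lemma acyc_sub:
  assumes "T \<subseteq> U" "\<forall>a\<in>U. \<forall>b\<in>U. Gstar_edge a b \<longrightarrow> f a < (f b::nat)"
  shows "acyclic (induced_rel Gstar_edge T)"
  using assms by (intro acyc_ord[where f=f]) blast

definition indep :: "nat set \<Rightarrow> bool" where
  "indep J \<longleftrightarrow> (\<forall>a\<in>J. \<forall>b\<in>J. a \<noteq> b \<longrightarrow> \<not> und_edge Gstar_edge a b)"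

lemma no_loop: "\<not> Gstar_edge u u"
  by (auto simp: Gstar_edge_def W_def K_def)

lemma acyc_indep:
  assumes "J \<subseteq> U" "indep J"
    "\<forall>a\<in>U. \<forall>b\<in>U. Gstar_edge a b \<and> \<not> Gstar_edge b a \<longrightarrow> f a < (f b::nat)"
  shows "acyclic (induced_rel Gstar_edge J)"
proof (rule acyc_ord[where f=f], intro ballI impI)
  fix a b assume ab: "a \<in> J" "b \<in> J" "Gstar_edge a b"
  then have "a \<noteq> b" using no_loop by blast
  then have "\<not> Gstar_edge b a" using assms(2) ab unfolding indep_def und_edge_def by blast
  then show "f a < f b" using assms ab by blast
qed

lemma iv: "{1..12::nat} = {1,2,3,4,5,6,7,8,9,10,11,12}" by (auto; presburger)

lemma edge_iff: "Gstar_edge a b \<longleftrightarrow> (a \<in> {1,2,3,4} \<and> b \<in> {5,6,9,10}) \<or> (a \<in> {5,6,7,8} \<and> b \<in> {1,2,9,11}) \<or> (a \<in> {9,10,11,12} \<and> b \<in> {1,3,5,7})"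
  by (auto simp: Gstar_edge_def W_def K_def)

lemma L1:
  assumes "J \<subseteq> {1..12}" "indep J" "a \<in> {2,7,10}" "b \<in> {3,6,11}" "a \<notin> J" "b \<notin> J"
  shows "acyclic (induced_rel Gstar_edge J)"
proof -
  have J: "J \<subseteq> {1,2,3,4,5,6,7,8,9,10,11,12} - {a,b}" using assms iv by auto
  show ?thesis
    using assms(3,4)
  proof (elim insertE emptyE)
    assume "a = 2" "b = 3"
    then have J': "J \<subseteq> {1,4,5,6,7,8,9,10,11,12}" using J by auto
    show ?thesis
      by (rule acyc_indep[OF J' assms(2), where f="\<lambda>v. [99::nat, 10, 99, 99, 0, 8, 4, 9, 0, 6, 5, 7, 0] ! v"]) (simp add: edge_iff)
  next
    assume "a = 2" "b = 6"
    then have J': "J \<subseteq> {1,3,4,5,7,8,9,10,11,12}" using J by auto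
    show ?thesis
      by (rule acyc_indep[OF J' assms(2), where f="\<lambda>v. [99::nat, 10, 99, 7, 0, 9, 99, 8, 0, 5, 6, 4, 0] ! v"]) (simp add: edge_iff)
  next
    assume "a = 2" "b = 11"
    then have J': "J \<subseteq> {1,3,4,5,6,7,8,9,10,12}" using J by auto
    show ?thesis
      by (rule acyc_indep[OF J' assms(2), where f="\<lambda>v. [99::nat, 10, 99, 4, 0, 7, 6, 8, 0, 9, 5, 99, 0] ! v"]) (simp add: edge_iff)
  next
    assume "a = 7" "b = 3"
    then have J': "J \<subseteq> {1,2,4,5,6,8,9,10,11,12}" using J by auto
    show ?thesis
      by (rule acyc_indep[OF J' assms(2), where f="\<lambda>v. [99::nat, 10, 4, 99, 0, 9, 5, 99, 0, 7, 6, 8, 0] ! v"]) (simp add: edge_iff)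
  next
    assume "a = 7" "b = 6"
    then have J': "J \<subseteq> {1,2,3,4,5,8,9,10,11,12}" using J by auto
    show ?thesis
      by (rule acyc_indep[OF J' assms(2), where f="\<lambda>v. [99::nat, 8, 4, 9, 0, 10, 99, 99, 0, 6, 7, 5, 0] ! v"]) (simp add: edge_iff)
  next
    assume "a = 7" "b = 11"
    then have J': "J \<subseteq> {1,2,3,4,5,6,8,9,10,12}" using J by auto
    show ?thesis
      by (rule acyc_indep[OF J' assms(2), where f="\<lambda>v. [99::nat, 5, 4, 6, 0, 9, 8, 99, 0, 10, 7, 99, 0] ! v"]) (simp add: edge_iff)
  next
    assume "a = 10" "b = 3"
    then have J': "J \<subseteq> {1,2,4,5,6,7,8,9,11,12}" using J by auto
    show ?thesis
      by (rule acyc_indep[OF J' assms(2), where f="\<lambda>v. [99::nat, 10, 7, 99, 0, 5, 6, 4, 0, 9, 99, 8, 0] ! v"]) (simp add: edge_iff)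
  next
    assume "a = 10" "b = 6"
    then have J': "J \<subseteq> {1,2,3,4,5,7,8,9,11,12}" using J by auto
    show ?thesis
      by (rule acyc_indep[OF J' assms(2), where f="\<lambda>v. [99::nat, 7, 8, 6, 0, 9, 99, 5, 0, 10, 99, 4, 0] ! v"]) (simp add: edge_iff)
  next
    assume "a = 10" "b = 11"
    then have J': "J \<subseteq> {1,2,3,4,5,6,7,8,9,12}" using J by auto
    show ?thesis
      by (rule acyc_indep[OF J' assms(2), where f="\<lambda>v. [99::nat, 8, 9, 4, 0, 6, 7, 5, 0, 10, 99, 99, 0] ! v"]) (simp add: edge_iff)
  qed
qed

lemma W1:
  assumes "x \<in> {1,3,5,6,9,11}" "J \<subseteq> {2,4,7,8,10,12}"
  shows "\<exists>y\<in>{2,7,10}::nat set. acyclic (induced_rel Gstar_edge (insert x (J - {y})))"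
  using assms(1)
proof (elim insertE emptyE)
  assume x: "x = 1"
  have T: "insert x (J - {10}) \<subseteq> {1,2,4,7,8,12}" using assms(2) x by auto
  have "acyclic (induced_rel Gstar_edge (insert x (J - {10})))"
    by (rule acyc_sub[OF T, where f="\<lambda>v. [99::nat, 5, 6, 99, 0, 99, 99, 4, 0, 99, 99, 99, 0] ! v"]) (simp add: edge_iff)
  then show ?thesis by (intro bexI[where x=10]) simp_all
next
  assume x: "x = 3"
  have T: "insert x (J - {10}) \<subseteq> {2,3,4,7,8,12}" using assms(2) x by auto
  have "acyclic (induced_rel Gstar_edge (insert x (J - {10})))"
    by (rule acyc_sub[OF T, where f="\<lambda>v. [99::nat, 99, 6, 4, 0, 99, 99, 5, 0, 99, 99, 99, 0] ! v"]) (simp add: edge_iff)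
  then show ?thesis by (intro bexI[where x=10]) simp_all
next
  assume x: "x = 5"
  have T: "insert x (J - {2}) \<subseteq> {4,5,7,8,10,12}" using assms(2) x by auto
  have "acyclic (induced_rel Gstar_edge (insert x (J - {2})))"
    by (rule acyc_sub[OF T, where f="\<lambda>v. [99::nat, 99, 99, 99, 0, 5, 99, 6, 0, 99, 4, 99, 0] ! v"]) (simp add: edge_iff)
  then show ?thesis by (intro bexI[where x=2]) simp_all
next
  assume x: "x = 6"
  have T: "insert x (J - {2}) \<subseteq> {4,6,7,8,10,12}" using assms(2) x by auto
  have "acyclic (induced_rel Gstar_edge (insert x (J - {2})))"
    by (rule acyc_sub[OF T, where f="\<lambda>v. [99::nat, 99, 99, 99, 0, 99, 4, 6, 0, 99, 5, 99, 0] ! v"]) (simp add: edge_iff)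
  then show ?thesis by (intro bexI[where x=2]) simp_all
next
  assume x: "x = 9"
  have T: "insert x (J - {7}) \<subseteq> {2,4,8,9,10,12}" using assms(2) x by auto
  have "acyclic (induced_rel Gstar_edge (insert x (J - {7})))"
    by (rule acyc_sub[OF T, where f="\<lambda>v. [99::nat, 99, 4, 99, 0, 99, 99, 99, 0, 5, 6, 99, 0] ! v"]) (simp add: edge_iff)
  then show ?thesis by (intro bexI[where x=7]) simp_all
next
  assume x: "x = 11"
  have T: "insert x (J - {7}) \<subseteq> {2,4,8,10,11,12}" using assms(2) x by auto
  have "acyclic (induced_rel Gstar_edge (insert x (J - {7})))"
    by (rule acyc_sub[OF T, where f="\<lambda>v. [99::nat, 99, 5, 99, 0, 99, 99, 99, 0, 99, 6, 4, 0] ! v"]) (simp add: edge_iff)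
  then show ?thesis by (intro bexI[where x=7]) simp_all
qed

lemma W2:
  assumes "x \<in> {1,2,5,7,9,10}" "J \<subseteq> {3,4,6,8,11,12}"
  shows "\<exists>y\<in>{3,6,11}::nat set. acyclic (induced_rel Gstar_edge (insert x (J - {y})))"
  using assms(1)
proof (elim insertE emptyE)
  assume x: "x = 1"
  have T: "insert x (J - {6}) \<subseteq> {1,3,4,8,11,12}" using assms(2) x by auto
  have "acyclic (induced_rel Gstar_edge (insert x (J - {6})))"
    by (rule acyc_sub[OF T, where f="\<lambda>v. [99::nat, 5, 99, 6, 0, 99, 99, 99, 0, 99, 99, 4, 0] ! v"]) (simp add: edge_iff)
  then show ?thesis by (intro bexI[where x=6]) simp_all
next
  assume x: "x = 2"
  have T: "insert x (J - {6}) \<subseteq> {2,3,4,8,11,12}" using assms(2) x by auto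
  have "acyclic (induced_rel Gstar_edge (insert x (J - {6})))"
    by (rule acyc_sub[OF T, where f="\<lambda>v. [99::nat, 99, 4, 6, 0, 99, 99, 99, 0, 99, 99, 5, 0] ! v"]) (simp add: edge_iff)
  then show ?thesis by (intro bexI[where x=6]) simp_all
next
  assume x: "x = 5"
  have T: "insert x (J - {11}) \<subseteq> {3,4,5,6,8,12}" using assms(2) x by auto
  have "acyclic (induced_rel Gstar_edge (insert x (J - {11})))"
    by (rule acyc_sub[OF T, where f="\<lambda>v. [99::nat, 99, 99, 4, 0, 5, 6, 99, 0, 99, 99, 99, 0] ! v"]) (simp add: edge_iff)
  then show ?thesis by (intro bexI[where x=11]) simp_all
next
  assume x: "x = 7"
  have T: "insert x (J - {11}) \<subseteq> {3,4,6,7,8,12}" using assms(2) x by auto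
  have "acyclic (induced_rel Gstar_edge (insert x (J - {11})))"
    by (rule acyc_sub[OF T, where f="\<lambda>v. [99::nat, 99, 99, 5, 0, 99, 6, 4, 0, 99, 99, 99, 0] ! v"]) (simp add: edge_iff)
  then show ?thesis by (intro bexI[where x=11]) simp_all
next
  assume x: "x = 9"
  have T: "insert x (J - {3}) \<subseteq> {4,6,8,9,11,12}" using assms(2) x by auto
  have "acyclic (induced_rel Gstar_edge (insert x (J - {3})))"
    by (rule acyc_sub[OF T, where f="\<lambda>v. [99::nat, 99, 99, 99, 0, 99, 4, 99, 0, 5, 99, 6, 0] ! v"]) (simp add: edge_iff)
  then show ?thesis by (intro bexI[where x=3]) simp_all
next
  assume x: "x = 10"
  have T: "insert x (J - {3}) \<subseteq> {4,6,8,10,11,12}" using assms(2) x by auto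
  have "acyclic (induced_rel Gstar_edge (insert x (J - {3})))"
    by (rule acyc_sub[OF T, where f="\<lambda>v. [99::nat, 99, 99, 99, 0, 99, 5, 99, 0, 99, 4, 6, 0] ! v"]) (simp add: edge_iff)
  then show ?thesis by (intro bexI[where x=3]) simp_all
qed

lemma indep_mono: "indep U \<Longrightarrow> J \<subseteq> U \<Longrightarrow> indep J"
  unfolding indep_def by blast

lemma finS: "S \<subseteq> {1..12::nat} \<Longrightarrow> finite S"
  using finite_subset by blast

lemma finA: "finite S \<Longrightarrow> finite {card T | T. T \<subseteq> S \<and> P T}"
  by (rule finite_subset[of _ "{..card S}"]) (auto intro: card_mono)

lemma lt_case:
  assumes "finite S" "indep S" "{(c1,c2),(c2,c3),(c3,c1)} \<subseteq> induced_rel Gstar_edge S"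
  shows "MAIS Gstar_edge S < indep_number (und_edge Gstar_edge) S"
proof -
  let ?A = "{card T | T. T \<subseteq> S \<and> acyclic (induced_rel Gstar_edge T)}"
  let ?B = "{card T | T. T \<subseteq> S \<and> (\<forall>a\<in>T. \<forall>b\<in>T. a \<noteq> b \<longrightarrow> \<not> und_edge Gstar_edge a b)}"
  have "{} \<subseteq> S \<and> acyclic (induced_rel Gstar_edge {})" by (simp add: induced_rel_def acyclic_def)
  then have "card ({}::nat set) \<in> ?A" by blast
  then have "Max ?A \<in> ?A" using finA[OF assms(1)] by (intro Max_in) auto
  then obtain T where T: "T \<subseteq> S" "acyclic (induced_rel Gstar_edge T)" "Max ?A = card T" by auto
  have "(c1,c1) \<in> (induced_rel Gstar_edge S)\<^sup>+" using assms(3)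
    by (meson insert_subset r_into_trancl trancl_into_trancl)
  then have "\<not> acyclic (induced_rel Gstar_edge S)" unfolding acyclic_def by blast
  then have "T \<noteq> S" using T by blast
  then have "card T < card S" using T assms(1) by (meson psubsetI psubset_card_mono)
  moreover have "card S \<in> ?B" using assms(2) unfolding indep_def by blast
  then have "card S \<le> Max ?B" using finA[OF assms(1)] by (intro Max_ge) auto
  ultimately show ?thesis unfolding MAIS_def indep_number_def using T by linarith
qed

lemma nb1: "v \<in> {1,3,5,6,9,11} \<Longrightarrow> \<exists>w\<in>{2,7,10}. v \<noteq> w \<and> und_edge Gstar_edge v w"
  by (elim insertE emptyE) (simp_all add: und_edge_def edge_iff)

lemma nb2: "v \<in> {1,2,5,7,9,10} \<Longrightarrow> \<exists>w\<in>{3,6,11}. v \<noteq> w \<and> und_edge Gstar_edge v w"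
  by (elim insertE emptyE) (simp_all add: und_edge_def edge_iff)

lemma swap_card:
  assumes "finite J" "y \<in> J" "x \<notin> J"
  shows "card (insert x (J - {y})) = card J"
  using assms by (simp add: card_Diff_singleton) (metis card_0_eq empty_iff Suc_pred neq0_conv)

lemma ge_case:
  assumes S: "S \<subseteq> {1..12}"
    and nR: "\<not> (S = {2,10,7} \<union> ({4,8,12} \<inter> S) \<or> S = {3,6,11} \<union> ({4,8,12} \<inter> S))"
  shows "indep_number (und_edge Gstar_edge) S \<le> MAIS Gstar_edge S"
proof -
  let ?A = "{card T | T. T \<subseteq> S \<and> acyclic (induced_rel Gstar_edge T)}"
  let ?B = "{card T | T. T \<subseteq> S \<and> (\<forall>a\<in>T. \<forall>b\<in>T. a \<noteq> b \<longrightarrow> \<not> und_edge Gstar_edge a b)}"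
  have fin: "finite S" using finS[OF S] .
  have "{} \<subseteq> S \<and> (\<forall>a\<in>({}::nat set). \<forall>b\<in>{}. a \<noteq> b \<longrightarrow> \<not> und_edge Gstar_edge a b)" by simp
  then have "card ({}::nat set) \<in> ?B" by blast
  then have "Max ?B \<in> ?B" using finA[OF fin] by (intro Max_in) auto
  then obtain J where J: "J \<subseteq> S" "indep J" "Max ?B = card J" unfolding indep_def by auto
  have finJ: "finite J" using J fin finite_subset by blast
  have J12: "J \<subseteq> {1..12}" using J S by blast
  have S12: "S \<subseteq> {1,2,3,4,5,6,7,8,9,10,11,12}" using S iv by simp
  have "\<exists>T. T \<subseteq> S \<and> acyclic (induced_rel Gstar_edge T) \<and> card J \<le> card T"
  proof (cases "(\<exists>a\<in>{2,7,10}. a \<notin> J) \<and> (\<exists>b\<in>{3,6,11}. b \<notin> J)")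
    case True
    then obtain a b where ab: "a \<in> {2,7,10}" "b \<in> {3,6,11}" "a \<notin> J" "b \<notin> J" by blast
    have "acyclic (induced_rel Gstar_edge J)" by (rule L1[OF J12 J(2) ab])
    then show ?thesis using J by blast
  next
    case False
    then have "{2,7,10} \<subseteq> J \<or> {3,6,11} \<subseteq> J" by blast
    then show ?thesis
    proof
      assume sub: "{2,7,10} \<subseteq> J"
      have JU: "J \<subseteq> {2,4,7,8,10,12}"
      proof
        fix v assume v: "v \<in> J"
        show "v \<in> {2,4,7,8,10,12}"
        proof (rule ccontr)
          assume "v \<notin> {2,4,7,8,10,12}"
          then have "v \<in> {1,3,5,6,9,11}" using v J12 iv by auto
          then obtain w where "w \<in> {2,7,10}" "v \<noteq> w" "und_edge Gstar_edge v w" using nb1[OF \<open>v \<in> {1,3,5,6,9,11}\<close>] by blast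
          then show False using J(2) sub v unfolding indep_def by blast
        qed
      qed
      have "\<exists>x\<in>S. x \<in> {1,3,5,6,9,11}"
      proof (rule ccontr)
        assume "\<not> ?thesis"
        then have "S \<subseteq> {2,7,10,4,8,12}" using S12 by auto
        then have "S = {2,10,7} \<union> ({4,8,12} \<inter> S)" using sub J by blast
        then show False using nR by blast
      qed
      then obtain x where x: "x \<in> S" "x \<in> {1,3,5,6,9,11}" by blast
      then obtain y where y: "y \<in> {2,7,10}" "acyclic (induced_rel Gstar_edge (insert x (J - {y})))"
        using W1[OF x(2) JU] by blast
      have "x \<notin> J" using x(2) JU by auto
      moreover have "y \<in> J" using y(1) sub by blast
      ultimately have "card (insert x (J - {y})) = card J" using swap_card[OF finJ] by blast
      moreover have "insert x (J - {y}) \<subseteq> S" using x J by blast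
      ultimately show ?thesis using y(2) by (intro exI[of _ "insert x (J - {y})"]) simp
    next
      assume sub: "{3,6,11} \<subseteq> J"
      have JU: "J \<subseteq> {3,4,6,8,11,12}"
      proof
        fix v assume v: "v \<in> J"
        show "v \<in> {3,4,6,8,11,12}"
        proof (rule ccontr)
          assume "v \<notin> {3,4,6,8,11,12}"
          then have "v \<in> {1,2,5,7,9,10}" using v J12 iv by auto
          then obtain w where "w \<in> {3,6,11}" "v \<noteq> w" "und_edge Gstar_edge v w" using nb2[OF \<open>v \<in> {1,2,5,7,9,10}\<close>] by blast
          then show False using J(2) sub v unfolding indep_def by blast
        qed
      qed
      have "\<exists>x\<in>S. x \<in> {1,2,5,7,9,10}"
      proof (rule ccontr)
        assume "\<not> ?thesis"
        then have "S \<subseteq> {3,6,11,4,8,12}" using S12 by auto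
        then have "S = {3,6,11} \<union> ({4,8,12} \<inter> S)" using sub J by blast
        then show False using nR by blast
      qed
      then obtain x where x: "x \<in> S" "x \<in> {1,2,5,7,9,10}" by blast
      then obtain y where y: "y \<in> {3,6,11}" "acyclic (induced_rel Gstar_edge (insert x (J - {y})))"
        using W2[OF x(2) JU] by blast
      have "x \<notin> J" using x(2) JU by auto
      moreover have "y \<in> J" using y(1) sub by blast
      ultimately have "card (insert x (J - {y})) = card J" using swap_card[OF finJ] by blast
      moreover have "insert x (J - {y}) \<subseteq> S" using x J by blast
      ultimately show ?thesis using y(2) by (intro exI[of _ "insert x (J - {y})"]) simp
    qed
  qed
  then obtain T where T: "T \<subseteq> S" "acyclic (induced_rel Gstar_edge T)" "card J \<le> card T" by blast
  then have "card T \<le> Max ?A" using finA[OF fin] by (intro Max_ge) auto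
  then show ?thesis unfolding MAIS_def indep_number_def using J T by linarith
qed

theorem theorem4:
  fixes S :: "nat set"
  assumes "S \<subseteq> {1..12}"
  shows "MAIS Gstar_edge S < indep_number (und_edge Gstar_edge) S \<longleftrightarrow>
         (S = {2,10,7} \<union> ({4,8,12} \<inter> S) \<or> S = {3,6,11} \<union> ({4,8,12} \<inter> S))"
proof
  assume "MAIS Gstar_edge S < indep_number (und_edge Gstar_edge) S"
  then show "S = {2,10,7} \<union> ({4,8,12} \<inter> S) \<or> S = {3,6,11} \<union> ({4,8,12} \<inter> S)"
    using ge_case[OF assms] by linarith
next
  have fin: "finite S" using finS[OF assms] .
  assume "S = {2,10,7} \<union> ({4,8,12} \<inter> S) \<or> S = {3,6,11} \<union> ({4,8,12} \<inter> S)"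
  then show "MAIS Gstar_edge S < indep_number (und_edge Gstar_edge) S"
  proof
    assume eq: "S = {2,10,7} \<union> ({4,8,12} \<inter> S)"
    have i: "indep {2,10,7,4,8,12}" by (simp add: indep_def und_edge_def edge_iff)
    have "S \<subseteq> {2,10,7,4,8,12}" using eq by blast
    then have "indep S" using indep_mono[OF i] by blast
    moreover have "{(2,10),(10,7),(7,2)} \<subseteq> induced_rel Gstar_edge S"
      using eq by (subst eq) (auto simp: induced_rel_def edge_iff)
    ultimately show ?thesis using lt_case fin by blast
  next
    assume eq: "S = {3,6,11} \<union> ({4,8,12} \<inter> S)"
    have i: "indep {3,6,11,4,8,12}" by (simp add: indep_def und_edge_def edge_iff)
    have "S \<subseteq> {3,6,11,4,8,12}" using eq by blast
    then have "indep S" using indep_mono[OF i] by blast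
    moreover have "{(3,6),(6,11),(11,3)} \<subseteq> induced_rel Gstar_edge S"
      using eq by (subst eq) (auto simp: induced_rel_def edge_iff)
    ultimately show ?thesis using lt_case fin by blast
  qed
qed

end
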